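(* Let $K$ and $L$ be compact convex subsets of $\mathbb{R}^n$, and let $1 \leq d \leq n$. The following are equivalent: (i) For every polytope $Q \subseteq K$ having at most $d+1$ vertices, there exists $v \in \mathbb{R}^n$ such that $Q + v \subseteq L$. (ii) For every $d$-dimensional linear subspace $\xi$ of $\mathbb{R}^n$, there exists $v \in \xi$ such that $K_\xi + v \subseteq L_\xi$.
   Context: For a set $S\subseteq\mathbb{R}^n$ and a linear subspace $\xi$, $S_\xi$ denotes the orthogonal projection of $S$ onto $\xi$. Named in the paper the "Generalized Inscribed Polytope Containment Theorem". *)

theory Defs
  imports "HOL-Analysis.Analysis"
begin

text \<open>Orthogonal projection of a point onto a linear subspace xi: the unique
  point p of xi with x - p orthogonal to xi (well defined for linear subspaces
  of a Euclidean space).\<close>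
definition orth_proj :: "'a::euclidean_space set \<Rightarrow> 'a \<Rightarrow> 'a" where
  "orth_proj xi x = (THE p. p \<in> xi \<and> (\<forall>y\<in>xi. (x - p) \<bullet> y = 0))"

definition proj_set :: "'a::euclidean_space set \<Rightarrow> 'a set \<Rightarrow> 'a set" where
  "proj_set xi S = orth_proj xi ` S"

end

theory Submission
  imports Defs
begin

lemma orth_proj_ex:
  fixes X :: "'a::euclidean_space set"
  assumes "subspace X"
  shows "\<exists>!p. p \<in> X \<and> (\<forall>y\<in>X. (x - p) \<bullet> y = 0)"
proof -
  obtain y z where yz: "y \<in> span X" "\<And>w. w \<in> span X \<Longrightarrow> orthogonal z w" "x = y + z"
    using orthogonal_subspace_decomp_exists by metis
  have ex: "y \<in> X \<and> (\<forall>w\<in>X. (x - y) \<bullet> w = 0)"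
  proof -
    have sX: "span X = X" using assms by (simp add: span_eq_iff)
    show ?thesis using yz sX by (auto simp: orthogonal_def)
  qed
  show ?thesis
  proof (rule ex1I[of _ y])
    show "y \<in> X \<and> (\<forall>w\<in>X. (x - y) \<bullet> w = 0)" by (rule ex)
    fix p assume p: "p \<in> X \<and> (\<forall>w\<in>X. (x - p) \<bullet> w = 0)"
    have d: "p - y \<in> X" using p ex assms subspace_diff by blast
    have "(x - p) \<bullet> (p - y) = 0" "(x - y) \<bullet> (p - y) = 0" using p ex d by auto
    then have "(p - y) \<bullet> (p - y) = 0" by (simp add: inner_diff_left)
    then show "p = y" by simp
  qed
qed

lemma orth_proj_props:
  fixes X :: "'a::euclidean_space set"
  assumes "subspace X"
  shows "orth_proj X x \<in> X" "\<And>y. y \<in> X \<Longrightarrow> (x - orth_proj X x) \<bullet> y = 0"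
  using theI'[OF orth_proj_ex[OF assms, of x]] unfolding orth_proj_def by auto

lemma orth_proj_unique:
  fixes X :: "'a::euclidean_space set"
  assumes "subspace X" "p \<in> X" "\<And>y. y \<in> X \<Longrightarrow> (x - p) \<bullet> y = 0"
  shows "orth_proj X x = p"
  unfolding orth_proj_def
  by (rule the1_equality[OF orth_proj_ex[OF assms(1)]]) (use assms(2,3) in blast)

lemma orth_proj_linear:
  fixes X :: "'a::euclidean_space set"
  assumes "subspace X"
  shows "linear (orth_proj X)"
proof (rule linearI)
  fix x y
  show "orth_proj X (x + y) = orth_proj X x + orth_proj X y"
    apply (rule orth_proj_unique[OF assms])
     apply (rule subspace_add[OF assms orth_proj_props(1)[OF assms] orth_proj_props(1)[OF assms]])
  proof -
    fix w assume w: "w \<in> X"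
    have "(x - orth_proj X x) \<bullet> w = 0" "(y - orth_proj X y) \<bullet> w = 0"
      using orth_proj_props(2)[OF assms w] by auto
    then show "(x + y - (orth_proj X x + orth_proj X y)) \<bullet> w = 0"
      by (simp add: inner_diff_left inner_add_left)
  qed
next
  fix c :: real and x
  show "orth_proj X (c *\<^sub>R x) = c *\<^sub>R orth_proj X x"
    apply (rule orth_proj_unique[OF assms])
     apply (rule subspace_scale[OF assms orth_proj_props(1)[OF assms]])
  proof -
    fix w assume w: "w \<in> X"
    have "(x - orth_proj X x) \<bullet> w = 0"
      using orth_proj_props(2)[OF assms w] by auto
    then have "c * ((x - orth_proj X x) \<bullet> w) = 0" by simp
    then show "(c *\<^sub>R x - c *\<^sub>R orth_proj X x) \<bullet> w = 0"
      by (simp only: scaleR_right_diff_distrib[symmetric] inner_scaleR_left)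
  qed
qed

lemma Helly_sub_induct:
  fixes \<F> :: "'a::euclidean_space set set"
  assumes "card \<F> = n"
    and "n \<ge> d + 1"
    and "\<forall>S\<in>\<F>. convex S \<and> S \<subseteq> V" "dim V \<le> d" "\<forall>T\<subseteq>\<F>. card T = d + 1 \<longrightarrow> \<Inter>T \<noteq> {}"
  shows "\<Inter>\<F> \<noteq> {}"
  using assms
proof (induction n arbitrary: \<F>)
  case 0
  then show ?case by auto
next
  case (Suc n)
  have "finite \<F>"
    using \<open>card \<F> = Suc n\<close> by (auto intro: card_ge_0_finite)
  show "\<Inter>\<F> \<noteq> {}"
  proof (cases "n = d")
    case True
    then show ?thesis
      by (simp add: Suc.prems)
  next
    case False
    have "\<Inter>(\<F> - {S}) \<noteq> {}" if "S \<in> \<F>" for S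
    proof (rule Suc.IH[rule_format])
      show "card (\<F> - {S}) = n"
        by (simp add: Suc.prems(1) \<open>finite \<F>\<close> that)
      show "d + 1 \<le> n"
        using False Suc.prems(2) by linarith
      show "\<And>t. \<lbrakk>t \<subseteq> \<F> - {S}; card t = d + 1\<rbrakk> \<Longrightarrow> \<Inter>t \<noteq> {}"
        by (simp add: Suc.prems(5) subset_Diff_insert)
    qed (use Suc in auto)
    then have "\<forall>S\<in>\<F>. \<exists>x. x \<in> \<Inter>(\<F> - {S})"
      by blast
    then obtain X where X: "\<And>S. S\<in>\<F> \<Longrightarrow> X S \<in> \<Inter>(\<F> - {S})"
      by metis
    have XV: "X ` \<F> \<subseteq> V"
    proof
      fix y assume "y \<in> X ` \<F>"
      then obtain S where S: "S \<in> \<F>" "y = X S" by auto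
      have "card (\<F> - {S}) = n" by (simp add: Suc.prems(1) \<open>finite \<F>\<close> S)
      moreover have "n \<ge> 1" using Suc.prems(2) False by linarith
      ultimately have "\<F> - {S} \<noteq> {}" by (metis card.empty not_one_le_zero)
      then obtain T where "T \<in> \<F>" "T \<noteq> S" by auto
      then show "y \<in> V" using X[OF S(1)] S Suc.prems(3) by blast
    qed
    show ?thesis
    proof (cases "inj_on X \<F>")
      case False
      then obtain S T where "S\<noteq>T" and st: "S\<in>\<F>" "T\<in>\<F>" "X S = X T"
        unfolding inj_on_def by auto
      then have *: "\<Inter>\<F> = \<Inter>(\<F> - {S}) \<inter> \<Inter>(\<F> - {T})" by auto
      show ?thesis
        by (metis "*" X disjoint_iff_not_equal st)
    next
      case True
      have cX: "card (X ` \<F>) = Suc n" using card_image[OF True] Suc.prems(1) by simp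
      have "dim (X ` \<F>) \<le> d" using dim_subset[OF XV] Suc.prems(4) by linarith
      then have "affine_dependent (X ` \<F>)"
        using affine_dependent_biggerset_general[of "X ` \<F>"] cX \<open>finite \<F>\<close> Suc.prems(2) False
        by auto
      then obtain M P where mp: "M \<inter> P = {}" "M \<union> P = X ` \<F>" "convex hull M \<inter> convex hull P \<noteq> {}"
        using Radon_partition[of "X ` \<F>"] \<open>finite \<F>\<close> by auto
      have "M \<subseteq> X ` \<F>" "P \<subseteq> X ` \<F>"
        using mp(2) by auto
      then obtain \<G> \<H> where gh:"M = X ` \<G>" "P = X ` \<H>" "\<G> \<subseteq> \<F>" "\<H> \<subseteq> \<F>"
        unfolding subset_image_iff by auto
      then have "\<F> \<union> (\<G> \<union> \<H>) = \<F>" by auto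
      then have \<F>: "\<F> = \<G> \<union> \<H>"
        using inj_on_Un_image_eq_iff[of X \<F> "\<G> \<union> \<H>"] and True
        unfolding mp(2)[unfolded image_Un[symmetric] gh]
        by auto
      have *: "\<G> \<inter> \<H> = {}"
        using gh local.mp(1) by blast
      have "convex hull (X ` \<H>) \<subseteq> \<Inter>\<G>" "convex hull (X ` \<G>) \<subseteq> \<Inter>\<H>"
        by (rule hull_minimal; use X * \<F> Suc.prems(3) in \<open>auto simp: convex_Inter\<close>)+
      then show ?thesis
        unfolding \<F> using mp(3)[unfolded gh] by blast
    qed
  qed 
qed

lemma exists_superspace:
  fixes S :: "'a::euclidean_space set"
  assumes "dim S \<le> n" "n \<le> DIM('a)"
  obtains T where "subspace T" "S \<subseteq> T" "dim T = n"
proof -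
  obtain B where B: "B \<subseteq> S" "independent B" "S \<subseteq> span B" "card B = dim S"
    by (rule basis_exists)
  obtain B' where B': "B \<subseteq> B'" "independent B'" "UNIV \<subseteq> span B'"
    by (rule maximal_independent_subset_extend[of B UNIV]) (use B(2) in auto)
  have finB': "finite B'" using independent_bound[OF B'(2)] by blast
  have cB': "card B' = DIM('a)"
  proof -
    have "card B' = dim (UNIV :: 'a set)" by (rule basis_card_eq_dim) (use B' in auto)
    then show ?thesis by simp
  qed
  have finB: "finite B" using B'(1) finB' finite_subset by blast
  have "card (B' - B) = DIM('a) - card B" using card_Diff_subset[OF finB B'(1)] cB' by simp
  then have "n - card B \<le> card (B' - B)" using assms B(4) by linarith
  then obtain C where C: "C \<subseteq> B' - B" "card C = n - card B" "finite C"
    by (rule obtain_subset_with_card_n)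
  have ind: "independent (B \<union> C)" using independent_mono[OF B'(2)] C(1) B'(1) by blast
  have cBC: "card (B \<union> C) = n"
  proof -
    have "B \<inter> C = {}" using C(1) by blast
    then have "card (B \<union> C) = card B + card C" by (rule card_Un_disjoint[OF finB C(3)])
    then show ?thesis using C(2) B(4) assms(1) by linarith
  qed
  show ?thesis
  proof
    show "subspace (span (B \<union> C))" by (rule subspace_span)
    show "S \<subseteq> span (B \<union> C)" using B(3) span_mono[of B "B \<union> C"] by blast
    show "dim (span (B \<union> C)) = n" using dim_span_eq_card_independent[OF ind] cBC by simp
  qed
qed

lemma dir1:
  fixes K L :: "'a::euclidean_space set"
  assumes "compact K" "convex K" "compact L" "convex L"
    and I: "\<forall>Q. polytope Q \<and> Q \<subseteq> K \<and> card {x. x extreme_point_of Q} \<le> d + 1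
              \<longrightarrow> (\<exists>v. (\<lambda>q. q + v) ` Q \<subseteq> L)"
    and xi: "subspace xi" "dim xi = d"
  shows "\<exists>v\<in>xi. (\<lambda>q. q + v) ` proj_set xi K \<subseteq> proj_set xi L"
proof -
  define P where "P = orth_proj xi"
  have PS: "\<And>S. proj_set xi S = P ` S" by (simp add: proj_set_def P_def)
  have lin: "linear P" using orth_proj_linear[OF xi(1)] P_def by simp
  have Pxi: "\<And>x. P x \<in> xi" using orth_proj_props(1)[OF xi(1)] P_def by simp
  have cPL: "compact (P ` L)"
    by (rule compact_continuous_image[OF linear_continuous_on[OF lin[unfolded linear_conv_bounded_linear]] assms(3)])
  have vPL: "convex (P ` L)" by (rule convex_linear_image[OF lin assms(4)])
  define A where "A k = (\<lambda>l. l - P k) ` (P ` L)" for k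
  have Acomp: "compact (A k)" for k
    unfolding A_def by (rule compact_continuous_image[OF _ cPL]) (intro continuous_intros)
  have Aconv: "convex (A k)" for k
  proof -
    have "A k = (\<lambda>l. (- P k) + l) ` (P ` L)" unfolding A_def by (simp add: algebra_simps)
    then show ?thesis using convex_translation[OF vPL] by simp
  qed
  have Axi: "A k \<subseteq> xi" for k
    unfolding A_def using Pxi subspace_diff[OF xi(1)] by blast
  have key: "\<exists>v. \<forall>k\<in>K'. v \<in> A k" if fin: "finite K'" and sub: "K' \<subseteq> K" and cK: "card K' \<le> d+1" for K'
  proof -
    let ?Q = "convex hull K'"
    have "polytope ?Q" unfolding polytope_def using fin by blast
    moreover have "?Q \<subseteq> K" by (rule hull_minimal) (use assms sub in auto)
    moreover have "{x. x extreme_point_of ?Q} \<subseteq> K'" using extreme_point_of_convex_hull by blast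
    then have "card {x. x extreme_point_of ?Q} \<le> d+1" using card_mono[OF fin] cK le_trans by blast
    ultimately obtain v where v: "(\<lambda>q. q + v) ` ?Q \<subseteq> L" using I by blast
    show ?thesis
    proof (intro exI ballI)
      fix k assume "k \<in> K'"
      then have "k + v \<in> L" using v hull_inc[of k K'] by blast
      then have mem: "P (k+v) \<in> P ` L" by blast
      have "P (k + v) = P k + P v" using linear_add[OF lin] .
      then have eq: "P v = (\<lambda>l. l - P k) (P (k+v))" by simp
      show "P v \<in> A k" unfolding A_def by (rule image_eqI[where f="\<lambda>l. l - P k", OF eq mem])
    qed
  qed
  have fin: "\<Inter>(A ` K') \<noteq> {}" if K': "finite K'" "K' \<subseteq> K" for K'
  proof -
    have small: "\<Inter>T \<noteq> {}" if T: "T \<subseteq> A ` K'" "card T \<le> d+1" for T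
    proof -
      obtain U where U: "U \<subseteq> K'" "inj_on A U" "T = A ` U" using T(1) unfolding subset_image_inj by blast
      have "finite U" using U(1) K' finite_subset by blast
      have "card U \<le> d+1" using card_image[OF U(2)] U(3) T(2) by simp
      obtain v where "\<forall>k\<in>U. v \<in> A k" using key[OF \<open>finite U\<close> _ \<open>card U \<le> d+1\<close>] U(1) K' by blast
      then show "\<Inter>T \<noteq> {}" using U(3) by blast
    qed
    show "\<Inter>(A ` K') \<noteq> {}"
    proof (cases "card (A ` K') \<le> d + 1")
      case True then show ?thesis using small by blast
    next
      case False
      show ?thesis
        by (rule Helly_sub_induct[of "A ` K'" "card (A ` K')" d xi]) (use False Aconv Axi xi small in auto)
    qed
  qed
  show ?thesis
  proof (cases "K = {}")
    case True then show ?thesis using subspace_0[OF xi(1)] by (auto simp: proj_set_def)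
  next
    case False
    then obtain k0 where k0: "k0 \<in> K" by blast
    have "A k0 \<inter> (\<Inter>k\<in>K. A k) \<noteq> {}"
    proof (rule compact_imp_fip_image)
      show "compact (A k0)" by (rule Acomp)
      show "\<And>k. k \<in> K \<Longrightarrow> closed (A k)" using Acomp compact_imp_closed by blast
      fix I' assume "finite I'" "I' \<subseteq> K"
      then have "\<Inter>(A ` insert k0 I') \<noteq> {}" using fin[of "insert k0 I'"] k0 by blast
      then show "A k0 \<inter> (\<Inter>k\<in>I'. A k) \<noteq> {}" by simp
    qed
    then obtain v where v: "v \<in> A k0" "\<And>k. k \<in> K \<Longrightarrow> v \<in> A k" by blast
    have "v \<in> xi" using v(1) Axi by blast
    moreover have "(\<lambda>q. q + v) ` proj_set xi K \<subseteq> proj_set xi L"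
    proof
      fix y assume "y \<in> (\<lambda>q. q + v) ` proj_set xi K"
      then obtain k where k: "k \<in> K" "y = P k + v" unfolding PS by blast
      from v(2)[OF k(1)] obtain l where "l \<in> L" "v = P l - P k" unfolding A_def by blast
      then show "y \<in> proj_set xi L" using k unfolding PS by auto
    qed
    ultimately show ?thesis by blast
  qed
qed

lemma dir2:
  fixes K L :: "'a::euclidean_space set"
  assumes "compact L" "convex L" "d \<le> DIM('a)"
    and II: "\<forall>xi. subspace xi \<and> dim xi = d
              \<longrightarrow> (\<exists>v\<in>xi. (\<lambda>q. q + v) ` proj_set xi K \<subseteq> proj_set xi L)"
    and Q: "polytope Q" "Q \<subseteq> K" "card {x. x extreme_point_of Q} \<le> d + 1"
  shows "\<exists>v. (\<lambda>q. q + v) ` Q \<subseteq> L"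
proof -
  define E where "E = {x. x extreme_point_of Q}"
  obtain S where S: "finite S" "Q = convex hull S" using Q(1) unfolding polytope_def by blast
  have "E \<subseteq> S" using extreme_point_of_convex_hull S(2) E_def by blast
  then have finE: "finite E" using S(1) finite_subset by blast
  have QE: "Q = convex hull E"
  proof -
    have "compact Q" using S compact_convex_hull finite_imp_compact by blast
    moreover have "convex Q" using S(2) convex_convex_hull by simp
    ultimately show ?thesis using Krein_Milman_Minkowski[of Q] E_def by simp
  qed
  have cardE: "card E \<le> d + 1" using Q(3) E_def by simp
  show ?thesis
  proof (cases "E = {}")
    case True then show ?thesis using QE by auto
  next
    case False
    then obtain q0 where q0: "q0 \<in> E" by blast
    have EK: "E \<subseteq> K" using QE Q(2) hull_subset[of E convex] by simp
    have LNE: "L \<noteq> {}"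
    proof -
      have "d \<le> dim (UNIV :: 'a set)" using assms(3) by simp
      then obtain xi0 :: "'a set" where xi0: "subspace xi0" "dim xi0 = d"
        by (rule choose_subspace_of_subspace)
      then obtain v where v: "(\<lambda>q. q + v) ` proj_set xi0 K \<subseteq> proj_set xi0 L" using II by blast
      have "orth_proj xi0 q0 + v \<in> (\<lambda>q. q + v) ` proj_set xi0 K"
        using q0 EK unfolding proj_set_def by blast
      then show ?thesis using v unfolding proj_set_def by blast
    qed
    have clL: "closed L" by (rule compact_imp_closed[OF assms(1)])
    define D where "D = (\<lambda>p. fst p - snd p) ` (L \<times> E)"
    define C where "C = convex hull D"
    have cD: "compact D" unfolding D_def
    proof (rule compact_continuous_image)
      show "continuous_on (L \<times> E) (\<lambda>p. fst p - snd p)"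
        by (intro continuous_on_diff continuous_on_fst continuous_on_snd continuous_on_id)
      show "compact (L \<times> E)" by (rule compact_Times[OF assms(1) finite_imp_compact[OF finE]])
    qed
    have cC: "compact C" unfolding C_def by (rule compact_convex_hull[OF cD])
    have DC: "D \<subseteq> C" unfolding C_def by (rule hull_subset)
    obtain l0 where l0: "l0 \<in> L" using LNE by blast
    have "(l0, q0) \<in> L \<times> E" using l0 q0 by simp
    then have "l0 - q0 \<in> D" unfolding D_def by (rule image_eqI[where f="\<lambda>p. fst p - snd p", rotated]) simp
    then have CNE: "C \<noteq> {}" using DC by blast
    define G where "G c = (\<Sum>q\<in>E. (infdist (q + c) L)^2)" for c
    have "continuous_on C G" unfolding G_def by (intro continuous_intros)
    then obtain c where c: "c \<in> C" "\<And>y. y \<in> C \<Longrightarrow> G c \<le> G y"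
      using continuous_attains_inf[OF cC CNE] by blast
    define l where "l q = closest_point L (q + c)" for q
    define u where "u q = l q - q - c" for q
    have lL: "l q \<in> L" for q using closest_point_in_set[OF clL LNE] l_def by simp
    have inf_eq: "infdist x L = dist x (closest_point L x)" for x
    proof -
      obtain y where y: "y \<in> L" "infdist x L = dist x y" by (rule infdist_attains_inf[OF clL LNE])
      have "dist x (closest_point L x) \<le> dist x y" using closest_point_le[OF clL y(1)] .
      moreover have "infdist x L \<le> dist x (closest_point L x)"
        using infdist_le[OF closest_point_in_set[OF clL LNE]] .
      ultimately show ?thesis using y(2) by linarith
    qed
    have infu: "infdist (q + c) L = norm (u q)" for q
    proof -
      have "infdist (q + c) L = norm (q + c - l q)" by (simp add: inf_eq l_def dist_norm)
      also have "\<dots> = norm (- u q)" unfolding u_def by (simp add: algebra_simps)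
      finally show ?thesis by simp
    qed
    have Gc: "G c = (\<Sum>q\<in>E. (norm (u q))^2)" unfolding G_def infu ..
    define m where "m = real (card E)"
    have m0: "m > 0" using finE False by (simp add: m_def card_gt_0_iff)
    define s where "s = (\<Sum>q\<in>E. u q)"
    define avg where "avg = c + (1/m) *\<^sub>R s"
    have avgC: "avg \<in> C"
    proof -
      have "(\<Sum>q\<in>E. (1/m) *\<^sub>R (l q - q)) = (1/m) *\<^sub>R (\<Sum>q\<in>E. u q + c)"
        by (simp add: scaleR_sum_right u_def)
      also have "(\<Sum>q\<in>E. u q + c) = s + m *\<^sub>R c"
        by (simp add: sum.distrib s_def m_def sum_constant_scaleR)
      also have "(1/m) *\<^sub>R (s + m *\<^sub>R c) = avg"
        using m0 by (simp add: avg_def scaleR_add_right algebra_simps)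
      finally have eq: "(\<Sum>q\<in>E. (1/m) *\<^sub>R (l q - q)) = avg" .
      have "(\<Sum>q\<in>E. (1/m) *\<^sub>R (l q - q)) \<in> C"
      proof (rule convex_sum[OF finE])
        show "convex C" unfolding C_def by (rule convex_convex_hull)
        show "(\<Sum>q\<in>E. 1/m) = 1" using m0 m_def by simp
        show "\<And>i. i \<in> E \<Longrightarrow> 0 \<le> 1/m" using m0 by simp
        show "\<And>i. i \<in> E \<Longrightarrow> l i - i \<in> C"
        proof -
          fix i assume "i \<in> E"
          then have "(l i, i) \<in> L \<times> E" using lL by simp
          then have "l i - i \<in> D" unfolding D_def by (rule image_eqI[where f="\<lambda>p. fst p - snd p", rotated]) simp
          then show "l i - i \<in> C" using DC by blast
        qed
      qed
      then show ?thesis using eq by simp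
    qed
    have Gavg: "G avg \<le> (\<Sum>q\<in>E. (norm (u q - (1/m) *\<^sub>R s))^2)"
      unfolding G_def
    proof (rule sum_mono)
      fix q assume "q \<in> E"
      have "infdist (q + avg) L \<le> dist (q + avg) (l q)" by (rule infdist_le[OF lL])
      also have "dist (q + avg) (l q) = norm (u q - (1/m) *\<^sub>R s)"
      proof -
        have "dist (q + avg) (l q) = norm (q + avg - l q)" by (simp add: dist_norm)
        also have "q + avg - l q = - (u q - (1/m) *\<^sub>R s)" unfolding u_def avg_def by (simp add: algebra_simps)
        finally show ?thesis by (simp only: norm_minus_cancel)
      qed
      finally show "(infdist (q + avg) L)^2 \<le> (norm (u q - (1/m) *\<^sub>R s))^2"
        using infdist_nonneg by (intro power_mono) auto
    qed
    have ident: "(\<Sum>q\<in>E. (norm (u q - w))^2) = (\<Sum>q\<in>E. (norm (u q))^2) - 2 * (s \<bullet> w) + m * (norm w)^2" for w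
    proof -
      have e: "(norm (a - w))^2 = (norm a)^2 - 2*(a \<bullet> w) + (norm w)^2" for a
        by (simp add: power2_norm_eq_inner inner_diff_left inner_diff_right inner_commute)
      show ?thesis
        by (simp add: e sum.distrib sum_subtractf s_def inner_sum_left sum_distrib_left m_def)
    qed
    have s0: "s = 0"
    proof -
      have "G c \<le> G avg" using c(2)[OF avgC] .
      also have "\<dots> \<le> (\<Sum>q\<in>E. (norm (u q))^2) - 2 * (s \<bullet> ((1/m) *\<^sub>R s)) + m * (norm ((1/m) *\<^sub>R s))^2"
        using Gavg ident by simp
      also have "2 * (s \<bullet> ((1/m) *\<^sub>R s)) = 2 * (norm s)^2 / m"
        by (simp add: power2_norm_eq_inner)
      also have "m * (norm ((1/m) *\<^sub>R s))^2 = (norm s)^2 / m"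
        using m0 by (simp add: power2_eq_square)
      finally have "(norm s)^2 / m \<le> 0" using Gc by simp
      then have "(norm s)^2 \<le> 0" using m0 by (simp add: divide_le_0_iff)
      then show ?thesis by simp
    qed
    have uq0: "u q0 \<in> span (u ` (E - {q0}))"
    proof -
      have "s = u q0 + (\<Sum>q\<in>E - {q0}. u q)" unfolding s_def using sum.remove[OF finE q0] .
      then have "u q0 = - (\<Sum>q\<in>E - {q0}. u q)" using s0 by (simp add: eq_neg_iff_add_eq_0)
      moreover have "(\<Sum>q\<in>E - {q0}. u q) \<in> span (u ` (E - {q0}))"
        by (rule span_sum) (auto intro: span_base)
      ultimately show ?thesis using span_neg by metis
    qed
    have uE: "u ` E \<subseteq> span (u ` (E - {q0}))"
    proof
      fix y assume "y \<in> u ` E"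
      then obtain q where q: "q \<in> E" "y = u q" by blast
      show "y \<in> span (u ` (E - {q0}))"
      proof (cases "q = q0")
        case True then show ?thesis using uq0 q by simp
      next
        case False then show ?thesis using q by (auto intro: span_base)
      qed
    qed
    have "dim (u ` E) \<le> card (u ` (E - {q0}))" using dim_le_card[OF uE] finE by simp
    also have "\<dots> \<le> card (E - {q0})" using card_image_le finE by blast
    also have "\<dots> \<le> d" using cardE finE q0 by simp
    finally have "dim (u ` E) \<le> d" .
    then obtain xi where xi: "subspace xi" "u ` E \<subseteq> xi" "dim xi = d"
      by (rule exists_superspace) (use assms(3) in auto)
    then obtain v where v: "v \<in> xi" "(\<lambda>q. q + v) ` proj_set xi K \<subseteq> proj_set xi L" using II by blast
    define P where "P = orth_proj xi"
    have ineq: "(norm (u q))^2 \<le> u q \<bullet> (v - c)" if q: "q \<in> E" for q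
    proof -
      have "P q + v \<in> (\<lambda>q. q + v) ` proj_set xi K" using q EK unfolding proj_set_def P_def by blast
      then have "P q + v \<in> P ` L" using v(2) unfolding proj_set_def P_def by blast
      then obtain l' where l': "l' \<in> L" "P l' = P q + v" by auto
      have uxi: "u q \<in> xi" using xi q by blast
      have o1: "(l' - P l') \<bullet> u q = 0" using orth_proj_props(2)[OF xi(1) uxi] P_def by simp
      have o2: "(q - P q) \<bullet> u q = 0" using orth_proj_props(2)[OF xi(1) uxi] P_def by simp
      have e1: "u q \<bullet> l' = u q \<bullet> q + u q \<bullet> v"
      proof -
        have "u q \<bullet> l' = u q \<bullet> P l'" by (metis o1 inner_diff_left inner_commute eq_iff_diff_eq_0)
        also have "\<dots> = u q \<bullet> P q + u q \<bullet> v" using l'(2) by (simp add: inner_add_right)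
        also have "u q \<bullet> P q = u q \<bullet> q" by (metis o2 inner_diff_left inner_commute eq_iff_diff_eq_0)
        finally show ?thesis .
      qed
      have dot: "(q + c - l q) \<bullet> (l' - l q) \<le> 0"
        using closest_point_dot[OF assms(2) clL l'(1), of "q + c"] l_def by simp
      have lq: "l q = u q + q + c" by (simp add: u_def)
      have "q + c - l q = - u q" using lq by simp
      then have "u q \<bullet> l q \<le> u q \<bullet> l'" using dot by (simp add: inner_diff_right)
      then have "u q \<bullet> u q + u q \<bullet> q + u q \<bullet> c \<le> u q \<bullet> q + u q \<bullet> v"
        using e1 lq by (simp add: inner_add_right)
      then show ?thesis by (simp add: power2_norm_eq_inner inner_diff_right)
    qed
    have "(\<Sum>q\<in>E. (norm (u q))^2) \<le> (\<Sum>q\<in>E. u q \<bullet> (v - c))" by (rule sum_mono) (rule ineq)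
    also have "\<dots> = s \<bullet> (v - c)" by (simp add: s_def inner_sum_left)
    finally have "(\<Sum>q\<in>E. (norm (u q))^2) \<le> 0" using s0 by simp
    moreover have "(\<Sum>q\<in>E. (norm (u q))^2) \<ge> 0" by (rule sum_nonneg) simp
    ultimately have "(\<Sum>q\<in>E. (norm (u q))^2) = 0" by linarith
    then have u0: "\<forall>q\<in>E. (norm (u q))^2 = 0"
      using sum_nonneg_eq_0_iff[OF finE, of "\<lambda>q. (norm (u q))^2"] by simp
    have EL: "(\<lambda>x. c + x) ` E \<subseteq> L"
    proof
      fix y assume "y \<in> (\<lambda>x. c + x) ` E"
      then obtain q where q: "q \<in> E" "y = c + q" by blast
      have "u q = 0" using u0 q by simp
      then have "l q = q + c" unfolding u_def by (simp add: algebra_simps)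
      then show "y \<in> L" using lL[of q] q by (simp add: add.commute)
    qed
    have "(\<lambda>q. q + c) ` Q = (\<lambda>x. c + x) ` (convex hull E)" using QE by (simp add: add.commute)
    also have "\<dots> = convex hull ((\<lambda>x. c + x) ` E)" by (rule convex_hull_translation[symmetric])
    also have "\<dots> \<subseteq> L" by (rule hull_minimal[where S=convex, OF EL assms(2)])
    finally show ?thesis by blast
  qed
qed

theorem theorem2p3:
  fixes K L :: "'a::euclidean_space set" and d :: nat
  assumes "compact K" "convex K" "compact L" "convex L"
    and "1 \<le> d" "d \<le> DIM('a)"
  shows "(\<forall>Q. polytope Q \<and> Q \<subseteq> K \<and> card {x. x extreme_point_of Q} \<le> d + 1
              \<longrightarrow> (\<exists>v. (\<lambda>q. q + v) ` Q \<subseteq> L))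
     \<longleftrightarrow> (\<forall>xi. subspace xi \<and> dim xi = d
              \<longrightarrow> (\<exists>v\<in>xi. (\<lambda>q. q + v) ` proj_set xi K \<subseteq> proj_set xi L))"
proof
  assume I: "\<forall>Q. polytope Q \<and> Q \<subseteq> K \<and> card {x. x extreme_point_of Q} \<le> d + 1
              \<longrightarrow> (\<exists>v. (\<lambda>q. q + v) ` Q \<subseteq> L)"
  show "\<forall>xi. subspace xi \<and> dim xi = d
              \<longrightarrow> (\<exists>v\<in>xi. (\<lambda>q. q + v) ` proj_set xi K \<subseteq> proj_set xi L)"
    using dir1[OF assms(1-4) I] by blast
next
  assume II: "\<forall>xi. subspace xi \<and> dim xi = d
              \<longrightarrow> (\<exists>v\<in>xi. (\<lambda>q. q + v) ` proj_set xi K \<subseteq> proj_set xi L)"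
  show "\<forall>Q. polytope Q \<and> Q \<subseteq> K \<and> card {x. x extreme_point_of Q} \<le> d + 1
              \<longrightarrow> (\<exists>v. (\<lambda>q. q + v) ` Q \<subseteq> L)"
    using dir2[OF assms(3,4,6) II] by blast
qed

end
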